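(* Let $G$ and $H$ be connected graphs. Then $$dim_s(G\square H)\ge \mu(H_{SR})\,dim_s(G\square K_2)\ge 2\,\mu(G_{SR})\,\mu(H_{SR}).$$
   Context: Graphs are finite, simple, undirected; for connected $G$, $d_G$ is the shortest-path distance and $I_G[u,v]$ is the set of vertices lying on some shortest $u$–$v$ path. A vertex $w$ strongly resolves vertices $u,v$ if $v\in I_G[u,w]$ or $u\in I_G[v,w]$. A strong resolving set of $G$ is a set $S\subseteq V(G)$ such that every pair of vertices is strongly resolved by some vertex of $S$; $dim_s(G)$ is the minimum cardinality of such a set. A vertex $u$ is maximally distant from $v$ if $d_G(v,w)\le d_G(u,v)$ for every neighbor $w$ of $u$; distinct $u,v$ are mutually maximally distant if each is maximally distant from the other. The boundary $\partial(G)$ is the set of vertices mutually maximally distant with some vertex. The strong resolving graph $G_{SR}$ has vertex set $\partial(G)$, two vertices adjacent iff they are mutually maximally distant in $G$. $\mu(F)$ is the matching number (maximum size of a matching) of $F$. $K_2$ is the complete graph on two vertices. $G\square H$ denotes the Cartesian product: vertex set $V(G)\times V(H)$, $(a,b)\sim(c,d)$ iff ($a=c$ and $bd\in E(H)$) or ($b=d$ and $ac\in E(G)$). *)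

theory Defs
  imports Main
begin

type_synonym 'a graph = "'a set \<times> ('a \<times> 'a) set"

definition verts :: "'a graph \<Rightarrow> 'a set" where "verts G = fst G"
definition adj :: "'a graph \<Rightarrow> ('a \<times> 'a) set" where "adj G = snd G"

definition simple_graph :: "'a graph \<Rightarrow> bool" where
  "simple_graph G \<longleftrightarrow> finite (verts G) \<and> adj G \<subseteq> verts G \<times> verts G
     \<and> sym (adj G) \<and> irrefl (adj G)"

definition connected_graph :: "'a graph \<Rightarrow> bool" where
  "connected_graph G \<longleftrightarrow> simple_graph G \<and> verts G \<noteq> {}
     \<and> (\<forall>u\<in>verts G. \<forall>v\<in>verts G. (u, v) \<in> (adj G)\<^sup>*)"

definition gdist :: "'a graph \<Rightarrow> 'a \<Rightarrow> 'a \<Rightarrow> nat" where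
  "gdist G u v = (LEAST n. (u, v) \<in> adj G ^^ n)"

definition interval :: "'a graph \<Rightarrow> 'a \<Rightarrow> 'a \<Rightarrow> 'a set" where
  "interval G u v = {w \<in> verts G. gdist G u w + gdist G w v = gdist G u v}"

definition strongly_resolves :: "'a graph \<Rightarrow> 'a \<Rightarrow> 'a \<Rightarrow> 'a \<Rightarrow> bool" where
  "strongly_resolves G w u v \<longleftrightarrow> v \<in> interval G u w \<or> u \<in> interval G v w"

definition strong_resolving_set :: "'a graph \<Rightarrow> 'a set \<Rightarrow> bool" where
  "strong_resolving_set G S \<longleftrightarrow> S \<subseteq> verts G \<and>
     (\<forall>u\<in>verts G. \<forall>v\<in>verts G. \<exists>w\<in>S. strongly_resolves G w u v)"

definition sdim :: "'a graph \<Rightarrow> nat" where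
  "sdim G = (LEAST k. \<exists>S. strong_resolving_set G S \<and> card S = k)"

definition maximally_distant :: "'a graph \<Rightarrow> 'a \<Rightarrow> 'a \<Rightarrow> bool" where
  "maximally_distant G u v \<longleftrightarrow>
     (\<forall>w. (u, w) \<in> adj G \<longrightarrow> gdist G v w \<le> gdist G u v)"

definition mutually_maximally_distant :: "'a graph \<Rightarrow> 'a \<Rightarrow> 'a \<Rightarrow> bool" where
  "mutually_maximally_distant G u v \<longleftrightarrow> u \<in> verts G \<and> v \<in> verts G \<and> u \<noteq> v
     \<and> maximally_distant G u v \<and> maximally_distant G v u"

definition boundary :: "'a graph \<Rightarrow> 'a set" where
  "boundary G = {u \<in> verts G. \<exists>v. mutually_maximally_distant G u v}"

definition strong_resolving_graph :: "'a graph \<Rightarrow> 'a graph" where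
  "strong_resolving_graph G =
     (boundary G, {(u, v). mutually_maximally_distant G u v})"

definition matching :: "'a graph \<Rightarrow> 'a set set \<Rightarrow> bool" where
  "matching F M \<longleftrightarrow> (\<forall>e\<in>M. \<exists>u v. e = {u, v} \<and> (u, v) \<in> adj F)
     \<and> (\<forall>e\<in>M. \<forall>e'\<in>M. e \<noteq> e' \<longrightarrow> e \<inter> e' = {})"

definition matching_number :: "'a graph \<Rightarrow> nat" where
  "matching_number F = Max {card M | M. matching F M}"

definition cart_prod :: "'a graph \<Rightarrow> 'b graph \<Rightarrow> ('a \<times> 'b) graph" where
  "cart_prod G H = (verts G \<times> verts H,
     {((a, b), (c, d)). a \<in> verts G \<and> b \<in> verts H \<and> c \<in> verts G \<and> d \<in> verts H \<and>
        ((a = c \<and> (b, d) \<in> adj H) \<or> (b = d \<and> (a, c) \<in> adj G))})"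

definition K2 :: "bool graph" where
  "K2 = (UNIV, {(x, y). x \<noteq> y})"

end

theory Submission imports Defs begin

lemma relpow_sym: "sym R \<Longrightarrow> (x,y) \<in> R^^n \<Longrightarrow> (y,x) \<in> R^^n"
proof (induction n arbitrary: x y)
  case 0 then show ?case by auto
next
  case (Suc n)
  from Suc.prems(2) obtain z where a: "(x,z)\<in>R^^n" and b: "(z,y)\<in>R" by (rule relpow_Suc_E)
  have "(y,z)\<in>R" using b Suc.prems(1) by (meson symD)
  moreover have "(z,x)\<in>R^^n" using Suc.IH[OF Suc.prems(1) a] .
  ultimately show ?case by (rule relpow_Suc_I2)
qed

lemma cg_walk: assumes "connected_graph G" "u\<in>verts G" "v\<in>verts G"
  shows "(u,v) \<in> adj G ^^ gdist G u v"
proof -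
  have "\<exists>n. (u,v)\<in>adj G^^n" using assms rtrancl_power unfolding connected_graph_def by blast
  then show ?thesis unfolding gdist_def by (rule LeastI_ex)
qed

lemma gdist_le: "(u,v) \<in> adj G ^^ n \<Longrightarrow> gdist G u v \<le> n"
  unfolding gdist_def by (rule Least_le)

lemma gdist_self[simp]: "gdist G u u = 0"
  by (rule gdist_le[where n=0, simplified]) (simp add: relpow_0_I)

lemma gdist_sym: assumes "connected_graph G" "u\<in>verts G" "v\<in>verts G"
  shows "gdist G u v = gdist G v u"
proof -
  have s: "sym (adj G)" using assms(1) unfolding connected_graph_def simple_graph_def by auto
  have "gdist G v u \<le> gdist G u v" by (rule gdist_le[OF relpow_sym[OF s cg_walk[OF assms]]])
  moreover have "gdist G u v \<le> gdist G v u" by (rule gdist_le[OF relpow_sym[OF s cg_walk[OF assms(1,3,2)]]])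
  ultimately show ?thesis by simp
qed

lemma gdist_tri: assumes "connected_graph G" "u\<in>verts G" "v\<in>verts G" "w\<in>verts G"
  shows "gdist G u w \<le> gdist G u v + gdist G v w"
  by (rule gdist_le[OF relpow_trans[OF cg_walk[OF assms(1,2,3)] cg_walk[OF assms(1,3,4)]]])

lemma adj_verts: "connected_graph G \<Longrightarrow> (u,v) \<in> adj G \<Longrightarrow> u \<in> verts G \<and> v \<in> verts G"
  unfolding connected_graph_def simple_graph_def by auto

lemma gdist_adj: assumes "connected_graph G" "u\<in>verts G" "(v,w)\<in>adj G"
  shows "gdist G u w \<le> gdist G u v + 1"
proof -
  have "v \<in> verts G" using adj_verts[OF assms(1,3)] by simp
  then have "(u,w) \<in> adj G ^^ Suc (gdist G u v)"
    using relpow_Suc_I[OF cg_walk[OF assms(1,2)] assms(3)] by blast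
  then show ?thesis using gdist_le by fastforce
qed

lemma maxdist_lemma:
  assumes G: "connected_graph G" and u: "u\<in>verts G" and v: "v\<in>verts G" and k: "k\<in>verts G"
    and md: "maximally_distant G v u"
    and eq: "gdist G u v + gdist G v k = gdist G u k"
  shows "k = v"
proof (rule ccontr)
  assume "k \<noteq> v"
  have w: "(v,k) \<in> adj G ^^ gdist G v k" using cg_walk[OF G v k] .
  have "gdist G v k \<noteq> 0" using w \<open>k\<noteq>v\<close> by (metis relpow_0_E)
  then obtain m where m: "gdist G v k = Suc m" by (cases "gdist G v k") auto
  from w m obtain n where vn: "(v,n)\<in>adj G" and nk: "(n,k)\<in>adj G^^m" by (metis relpow_Suc_E2)
  have nV: "n\<in>verts G" using adj_verts[OF G vn] by simp
  have "gdist G u n \<le> gdist G v u" using md vn unfolding maximally_distant_def by blast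
  also have "\<dots> = gdist G u v" using gdist_sym[OF G v u] .
  finally have 1: "gdist G u n \<le> gdist G u v" .
  have 2: "gdist G n k \<le> m" using gdist_le[OF nk] .
  have "gdist G u k \<le> gdist G u n + gdist G n k" using gdist_tri[OF G u nV k] .
  then show False using 1 2 eq m by linarith
qed


lemma verts_prod[simp]: "verts (cart_prod G H) = verts G \<times> verts H"
  unfolding cart_prod_def verts_def by simp

lemma adj_prod: "((a,b),(c,d)) \<in> adj (cart_prod G H) \<longleftrightarrow>
   a \<in> verts G \<and> b \<in> verts H \<and> c \<in> verts G \<and> d \<in> verts H \<and>
        ((a = c \<and> (b, d) \<in> adj H) \<or> (b = d \<and> (a, c) \<in> adj G))"
  unfolding cart_prod_def adj_def verts_def by simp

lemma lift1: assumes G: "connected_graph G" and b: "b \<in> verts H"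
  shows "(x,y)\<in>adj G^^n \<Longrightarrow> ((x,b),(y,b)) \<in> adj (cart_prod G H)^^n"
proof (induction n arbitrary: y)
  case 0 then show ?case by auto
next
  case (Suc n)
  from Suc.prems obtain z where a: "(x,z)\<in>adj G^^n" and e: "(z,y)\<in>adj G" by (rule relpow_Suc_E)
  have "((z,b),(y,b)) \<in> adj (cart_prod G H)" using adj_verts[OF G e] e b by (simp add: adj_prod)
  then show ?case using Suc.IH[OF a] by (rule relpow_Suc_I[rotated])
qed

lemma lift2: assumes H: "connected_graph H" and a: "a \<in> verts G"
  shows "(x,y)\<in>adj H^^n \<Longrightarrow> ((a,x),(a,y)) \<in> adj (cart_prod G H)^^n"
proof (induction n arbitrary: y)
  case 0 then show ?case by auto
next
  case (Suc n)
  from Suc.prems obtain z where a': "(x,z)\<in>adj H^^n" and e: "(z,y)\<in>adj H" by (rule relpow_Suc_E)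
  have "((a,z),(a,y)) \<in> adj (cart_prod G H)" using adj_verts[OF H e] e a by (simp add: adj_prod)
  then show ?case using Suc.IH[OF a'] by (rule relpow_Suc_I[rotated])
qed

lemma prod_lower: assumes G: "connected_graph G" and H: "connected_graph H"
  and a: "a\<in>verts G" and b: "b\<in>verts H"
  shows "((a,b),q) \<in> adj (cart_prod G H)^^n \<Longrightarrow> gdist G a (fst q) + gdist H b (snd q) \<le> n"
proof (induction n arbitrary: q)
  case 0 then show ?case by auto
next
  case (Suc n)
  from Suc.prems obtain z where w: "((a,b),z)\<in>adj (cart_prod G H)^^n"
     and e: "(z,q)\<in>adj (cart_prod G H)" by (rule relpow_Suc_E)
  obtain z1 z2 q1 q2 where zq: "z = (z1,z2)" "q = (q1,q2)" by (cases z, cases q) auto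
  have IH: "gdist G a z1 + gdist H b z2 \<le> n" using Suc.IH[OF w] zq by simp
  from e zq have ee: "z1 \<in> verts G \<and> z2 \<in> verts H \<and> q1 \<in> verts G \<and> q2 \<in> verts H \<and>
        ((z1 = q1 \<and> (z2, q2) \<in> adj H) \<or> (z2 = q2 \<and> (z1, q1) \<in> adj G))" by (simp add: adj_prod)
  show ?case
  proof (cases "z1 = q1 \<and> (z2, q2) \<in> adj H")
    case True
    then show ?thesis using gdist_adj[OF H b, of z2 q2] IH zq by auto
  next
    case False
    then have "z2 = q2" "(z1, q1) \<in> adj G" using ee by auto
    then show ?thesis using gdist_adj[OF G a, of z1 q1] IH zq by auto
  qed
qed

lemma prod_gdist: assumes G: "connected_graph G" and H: "connected_graph H"
  and a: "a\<in>verts G" and b: "b\<in>verts H" and c: "c\<in>verts G" and d: "d\<in>verts H"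
  shows "gdist (cart_prod G H) (a,b) (c,d) = gdist G a c + gdist H b d"
proof (rule antisym)
  have "((a,b),(c,b)) \<in> adj (cart_prod G H)^^gdist G a c" using lift1[OF G b cg_walk[OF G a c]] .
  moreover have "((c,b),(c,d)) \<in> adj (cart_prod G H)^^gdist H b d" using lift2[OF H c cg_walk[OF H b d]] .
  ultimately show "gdist (cart_prod G H) (a,b) (c,d) \<le> gdist G a c + gdist H b d"
    by (intro gdist_le) (rule relpow_trans)
next
  have "\<exists>n. ((a,b),(c,d)) \<in> adj (cart_prod G H)^^n"
    using relpow_trans[OF lift1[OF G b cg_walk[OF G a c]] lift2[OF H c cg_walk[OF H b d]]] by blast
  then have "((a,b),(c,d)) \<in> adj (cart_prod G H)^^gdist (cart_prod G H) (a,b) (c,d)"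
    unfolding gdist_def by (rule LeastI_ex)
  from prod_lower[OF G H a b this] show "gdist G a c + gdist H b d \<le> gdist (cart_prod G H) (a,b) (c,d)"
    by simp
qed

lemma prod_interval: assumes G: "connected_graph G" and H: "connected_graph H"
  and a: "a\<in>verts G" and b: "b\<in>verts H" and c: "c\<in>verts G" and d: "d\<in>verts H"
  and x: "x\<in>verts G" and y: "y\<in>verts H"
  shows "(x,y) \<in> interval (cart_prod G H) (a,b) (c,d) \<longleftrightarrow> x \<in> interval G a c \<and> y \<in> interval H b d"
proof -
  have t1: "gdist G a c \<le> gdist G a x + gdist G x c" using gdist_tri[OF G a x c] .
  have t2: "gdist H b d \<le> gdist H b y + gdist H y d" using gdist_tri[OF H b y d] .
  show ?thesis unfolding interval_def using t1 t2 a b c d x y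
    by (auto simp: prod_gdist[OF G H])
qed

lemma K2_conn: "connected_graph K2"
proof -
  have "(u,v) \<in> {(x::bool, y). x \<noteq> y}\<^sup>*" for u v
  proof (cases "u = v")
    case False then show ?thesis by (intro r_into_rtrancl) simp
  qed simp
  then show ?thesis unfolding connected_graph_def simple_graph_def K2_def verts_def adj_def
    by (auto simp: sym_def irrefl_def)
qed

lemma K2_verts[simp]: "verts K2 = UNIV" unfolding K2_def verts_def by simp

lemma K2_gdist: "gdist K2 x y = (if x = y then 0 else 1)"
proof (cases "x = y")
  case True then show ?thesis by simp
next
  case False
  have "(x,y) \<in> adj K2 ^^ 1" using False by (simp add: K2_def adj_def)
  then have "gdist K2 x y \<le> 1" by (rule gdist_le)
  moreover have "gdist K2 x y \<noteq> 0" using cg_walk[OF K2_conn, of x y] False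
    by (metis UNIV_I K2_verts relpow_0_E)
  ultimately show ?thesis using False by simp
qed

lemma K2_interval: "interval K2 a w = {a, w}"
  unfolding interval_def by (auto simp: K2_gdist)


lemma sdim_le: "strong_resolving_set G S \<Longrightarrow> sdim G \<le> card S"
  unfolding sdim_def by (rule Least_le) blast

lemma sdim_ex: "\<exists>S. strong_resolving_set G S \<and> card S = sdim G"
proof -
  have "strong_resolving_set G (verts G)"
    unfolding strong_resolving_set_def strongly_resolves_def interval_def
    by (auto, rule_tac x=v in bexI, auto)
  then have "\<exists>k S. strong_resolving_set G S \<and> card S = k" by blast
  then show ?thesis unfolding sdim_def by (rule LeastI_ex)
qed

lemma mmd_max: assumes G: "connected_graph G" and m: "mutually_maximally_distant G u v"
  and k: "k \<in> verts G" and i: "v \<in> interval G u k" shows "k = v"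
  using m i maxdist_lemma[OF G _ _ k] unfolding mutually_maximally_distant_def interval_def by blast

lemma mmd_sym: "mutually_maximally_distant G u v \<Longrightarrow> mutually_maximally_distant G v u"
  unfolding mutually_maximally_distant_def by auto

lemma part1_claim:
  assumes G: "connected_graph G" and H: "connected_graph H"
    and S: "strong_resolving_set (cart_prod G H) S"
    and m: "mutually_maximally_distant H s1 s2"
    and g1: "g1 \<in> verts G" and g2: "g2 \<in> verts G"
  shows "\<exists>g. (g2 \<in> interval G g1 g \<and> (g,s2) \<in> S) \<or> (g1 \<in> interval G g2 g \<and> (g,s1) \<in> S)"
proof -
  have s: "s1 \<in> verts H" "s2 \<in> verts H" using m unfolding mutually_maximally_distant_def by auto
  obtain w where w: "w \<in> S" and r: "strongly_resolves (cart_prod G H) w (g1,s1) (g2,s2)"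
    using S g1 g2 s unfolding strong_resolving_set_def by fastforce
  obtain g y where wg: "w = (g,y)" by (cases w)
  have gy: "g \<in> verts G" "y \<in> verts H" using S w wg unfolding strong_resolving_set_def by auto
  from r consider "(g2,s2) \<in> interval (cart_prod G H) (g1,s1) (g,y)"
    | "(g1,s1) \<in> interval (cart_prod G H) (g2,s2) (g,y)"
    unfolding strongly_resolves_def wg by blast
  then show ?thesis
  proof cases
    case 1
    then have "g2 \<in> interval G g1 g" "s2 \<in> interval H s1 y"
      using prod_interval[OF G H g1 s(1) gy g2 s(2)] by auto
    moreover have "y = s2" using mmd_max[OF H m gy(2)] calculation(2) .
    ultimately show ?thesis using w wg by blast
  next
    case 2
    then have "g1 \<in> interval G g2 g" "s1 \<in> interval H s2 y"
      using prod_interval[OF G H g2 s(2) gy g1 s(1)] by auto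
    moreover have "y = s1" using mmd_max[OF H mmd_sym[OF m] gy(2)] calculation(2) .
    ultimately show ?thesis using w wg by blast
  qed
qed

lemma part1_edge:
  assumes G: "connected_graph G" and H: "connected_graph H"
    and S: "strong_resolving_set (cart_prod G H) S"
    and m: "mutually_maximally_distant H h h'"
  shows "sdim (cart_prod G K2) \<le> card (S \<inter> (verts G \<times> {h,h'}))"
proof -
  define A where "A = S \<inter> (verts G \<times> {h,h'})"
  define f where "f = (\<lambda>(g::'a, y::'b). (g, y = h'))"
  have hh: "h \<noteq> h'" using m unfolding mutually_maximally_distant_def by auto
  have inj: "inj_on f A" unfolding inj_on_def A_def f_def using hh by auto
  have "strong_resolving_set (cart_prod G K2) (f ` A)"
    unfolding strong_resolving_set_def
  proof (intro conjI ballI)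
    show "f ` A \<subseteq> verts (cart_prod G K2)" using S unfolding A_def f_def strong_resolving_set_def by auto
  next
    fix u v assume u: "u \<in> verts (cart_prod G K2)" and v: "v \<in> verts (cart_prod G K2)"
    obtain g1 b1 g2 b2 where uv: "u = (g1,b1)" "v = (g2,b2)" by (cases u, cases v) auto
    have g12: "g1 \<in> verts G" "g2 \<in> verts G" using u v uv by auto
    define s1 where "s1 = (if b1 \<noteq> b2 then (if b1 then h' else h) else h)"
    define s2 where "s2 = (if b1 \<noteq> b2 then (if b2 then h' else h) else h')"
    have ms: "mutually_maximally_distant H s1 s2"
      using m mmd_sym[OF m] unfolding s1_def s2_def by (cases b1; cases b2) auto
    have sA: "s1 \<in> {h,h'}" "s2 \<in> {h,h'}" unfolding s1_def s2_def by auto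
    obtain g where gg: "(g2 \<in> interval G g1 g \<and> (g,s2) \<in> S) \<or> (g1 \<in> interval G g2 g \<and> (g,s1) \<in> S)"
      using part1_claim[OF G H S ms g12] by blast
    have gV: "g \<in> verts G" using gg S unfolding strong_resolving_set_def by auto
    from gg show "\<exists>w\<in>f ` A. strongly_resolves (cart_prod G K2) w u v"
    proof
      assume a: "g2 \<in> interval G g1 g \<and> (g,s2) \<in> S"
      have wA: "f (g,s2) \<in> f ` A" using a gV sA unfolding A_def by auto
      have "b2 \<in> interval K2 b1 (s2 = h')" unfolding K2_interval s2_def using hh by auto
      then have "v \<in> interval (cart_prod G K2) u (f (g,s2))"
        using prod_interval[OF G K2_conn g12(1) _ gV _ g12(2)] a uv unfolding f_def by auto
      then show ?thesis using wA unfolding strongly_resolves_def by blast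
    next
      assume a: "g1 \<in> interval G g2 g \<and> (g,s1) \<in> S"
      have wA: "f (g,s1) \<in> f ` A" using a gV sA unfolding A_def by auto
      have "b1 \<in> interval K2 b2 (s1 = h')" unfolding K2_interval s1_def using hh by auto
      then have "u \<in> interval (cart_prod G K2) v (f (g,s1))"
        using prod_interval[OF G K2_conn g12(2) _ gV _ g12(1)] a uv unfolding f_def by auto
      then show ?thesis using wA unfolding strongly_resolves_def by blast
    qed
  qed
  then have "sdim (cart_prod G K2) \<le> card (f ` A)" by (rule sdim_le)
  also have "\<dots> = card A" using card_image[OF inj] .
  finally show ?thesis unfolding A_def .
qed

lemma part2_claim:
  assumes G: "connected_graph G"
    and S: "strong_resolving_set (cart_prod G K2) S"
    and m: "mutually_maximally_distant G g g'"
  shows "(g,b) \<in> S \<or> (g',\<not>b) \<in> S"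
proof -
  have s: "g \<in> verts G" "g' \<in> verts G" using m unfolding mutually_maximally_distant_def by auto
  obtain w where w: "w \<in> S" and r: "strongly_resolves (cart_prod G K2) w (g,b) (g',\<not>b)"
    using S s unfolding strong_resolving_set_def by fastforce
  obtain x c where wg: "w = (x,c)" by (cases w)
  have x: "x \<in> verts G" using S w wg unfolding strong_resolving_set_def by auto
  from r consider "(g',\<not>b) \<in> interval (cart_prod G K2) (g,b) (x,c)"
    | "(g,b) \<in> interval (cart_prod G K2) (g',\<not>b) (x,c)"
    unfolding strongly_resolves_def wg by blast
  then show ?thesis
  proof cases
    case 1
    have e: "(g', \<not>b) \<in> interval (cart_prod G K2) (g,b) (x,c) \<longleftrightarrow> g' \<in> interval G g x \<and> (\<not>b) \<in> interval K2 b c"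
      by (rule prod_interval[OF G K2_conn s(1) _ x _ s(2)]) auto
    have "g' \<in> interval G g x" "(\<not>b) \<in> interval K2 b c" using 1 e by blast+
    moreover have "x = g'" using mmd_max[OF G m x] calculation(1) .
    moreover have "c = (\<not>b)" using calculation(2) unfolding K2_interval by auto
    ultimately show ?thesis using w wg by auto
  next
    case 2
    have e: "(g, b) \<in> interval (cart_prod G K2) (g',\<not>b) (x,c) \<longleftrightarrow> g \<in> interval G g' x \<and> b \<in> interval K2 (\<not>b) c"
      by (rule prod_interval[OF G K2_conn s(2) _ x _ s(1)]) auto
    have "g \<in> interval G g' x" "b \<in> interval K2 (\<not>b) c" using 2 e by blast+
    moreover have "x = g" using mmd_max[OF G mmd_sym[OF m] x] calculation(1) .
    moreover have "c = b" using calculation(2) unfolding K2_interval by auto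
    ultimately show ?thesis using w wg by auto
  qed
qed

lemma part2_edge:
  assumes G: "connected_graph G"
    and S: "strong_resolving_set (cart_prod G K2) S"
    and m: "mutually_maximally_distant G g g'"
  shows "2 \<le> card (S \<inter> ({g,g'} \<times> UNIV))"
proof -
  have gg: "g \<noteq> g'" using m unfolding mutually_maximally_distant_def by auto
  have fin: "finite S" using S G unfolding strong_resolving_set_def connected_graph_def simple_graph_def
    by (auto intro: finite_subset)
  obtain p where p: "p \<in> S" "p \<in> {(g,False),(g',True)}" using part2_claim[OF G S m, of False] by auto
  obtain q where q: "q \<in> S" "q \<in> {(g,True),(g',False)}" using part2_claim[OF G S m, of True] by auto
  have "p \<noteq> q" using p q gg by auto
  then have "card {p,q} = 2" by simp
  moreover have "{p,q} \<subseteq> S \<inter> ({g,g'} \<times> UNIV)" using p q by auto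
  ultimately show ?thesis using card_mono[of "S \<inter> ({g,g'} \<times> UNIV)" "{p,q}"] fin by auto
qed

lemma sum_bound:
  fixes F :: "'e set \<Rightarrow> 'v set"
  assumes fM: "finite M" and fS: "finite S"
    and dis: "\<And>e e'. e \<in> M \<Longrightarrow> e' \<in> M \<Longrightarrow> e \<noteq> e' \<Longrightarrow> F e \<inter> F e' = {}"
    and k: "\<And>e. e \<in> M \<Longrightarrow> k \<le> card (S \<inter> F e)"
  shows "card M * k \<le> card S"
proof -
  have "card M * k = (\<Sum>e\<in>M. k)" by simp
  also have "\<dots> \<le> (\<Sum>e\<in>M. card (S \<inter> F e))" using k by (rule sum_mono)
  also have "\<dots> = card (\<Union>e\<in>M. S \<inter> F e)"
    using fM fS dis by (subst card_UN_disjoint) auto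
  also have "\<dots> \<le> card S" using fS by (intro card_mono) auto
  finally show ?thesis .
qed

lemma adj_srg: "adj (strong_resolving_graph G) = {(u,v). mutually_maximally_distant G u v}"
  unfolding strong_resolving_graph_def adj_def by simp

lemma matching_props:
  assumes "matching (strong_resolving_graph G) M"
  shows "\<forall>e\<in>M. \<exists>u v. e = {u,v} \<and> mutually_maximally_distant G u v"
    "\<forall>e\<in>M. \<forall>e'\<in>M. e \<noteq> e' \<longrightarrow> e \<inter> e' = {}"
    "M \<subseteq> Pow (verts G)"
  using assms unfolding matching_def adj_srg mutually_maximally_distant_def by auto

lemma mn_ex: assumes G: "connected_graph G"
  shows "\<exists>M. matching (strong_resolving_graph G) M \<and> card M = matching_number (strong_resolving_graph G)"
proof -
  have fv: "finite (verts G)" using G unfolding connected_graph_def simple_graph_def by auto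
  have "{M. matching (strong_resolving_graph G) M} \<subseteq> Pow (Pow (verts G))"
    using matching_props(3) by blast
  then have "finite {M. matching (strong_resolving_graph G) M}" using fv by (meson finite_Pow_iff finite_subset)
  then have f: "finite {card M | M. matching (strong_resolving_graph G) M}"
    by (simp add: setcompr_eq_image)
  have "matching (strong_resolving_graph G) {}" unfolding matching_def by simp
  then have ne: "{card M | M. matching (strong_resolving_graph G) M} \<noteq> {}" by blast
  have "matching_number (strong_resolving_graph G) \<in> {card M | M. matching (strong_resolving_graph G) M}"
    unfolding matching_number_def using Max_in[OF f ne] .
  then show ?thesis by auto
qed

lemma matching_fin: assumes G: "connected_graph G" and "matching (strong_resolving_graph G) M"
  shows "finite M"
proof -
  have fv: "finite (verts G)" using G unfolding connected_graph_def simple_graph_def by auto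
  show ?thesis using matching_props(3)[OF assms(2)] fv by (meson finite_Pow_iff finite_subset)
qed

theorem theorem19:
  fixes G :: "'a graph" and H :: "'b graph"
  assumes "connected_graph G" and "connected_graph H"
  shows "matching_number (strong_resolving_graph H) * sdim (cart_prod G K2)
           \<le> sdim (cart_prod G H)
       \<and> 2 * matching_number (strong_resolving_graph G) * matching_number (strong_resolving_graph H)
           \<le> matching_number (strong_resolving_graph H) * sdim (cart_prod G K2)"
proof -
  note G = assms(1) and H = assms(2)
  obtain MH where MH: "matching (strong_resolving_graph H) MH" "card MH = matching_number (strong_resolving_graph H)"
    using mn_ex[OF H] by blast
  obtain MG where MG: "matching (strong_resolving_graph G) MG" "card MG = matching_number (strong_resolving_graph G)"
    using mn_ex[OF G] by blast
  obtain S1 where S1: "strong_resolving_set (cart_prod G H) S1" "card S1 = sdim (cart_prod G H)"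
    using sdim_ex by blast
  obtain S2 where S2: "strong_resolving_set (cart_prod G K2) S2" "card S2 = sdim (cart_prod G K2)"
    using sdim_ex by blast
  have fS1: "finite S1" using S1(1) G H unfolding strong_resolving_set_def connected_graph_def simple_graph_def
    by (auto intro: finite_subset)
  have fS2: "finite S2" using S2(1) G unfolding strong_resolving_set_def connected_graph_def simple_graph_def
    by (auto intro: finite_subset)
  have 1: "card MH * sdim (cart_prod G K2) \<le> card S1"
  proof (rule sum_bound[where F = "\<lambda>e. verts G \<times> e"])
    show "finite MH" using matching_fin[OF H MH(1)] .
    show "finite S1" using fS1 .
    fix e e' assume "e \<in> MH" "e' \<in> MH" "e \<noteq> e'"
    then show "verts G \<times> e \<inter> verts G \<times> e' = {}" using matching_props(2)[OF MH(1)] by blast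
  next
    fix e assume "e \<in> MH"
    then obtain u v where "e = {u,v}" "mutually_maximally_distant H u v" using matching_props(1)[OF MH(1)] by blast
    then show "sdim (cart_prod G K2) \<le> card (S1 \<inter> verts G \<times> e)" using part1_edge[OF G H S1(1)] by simp
  qed
  have 2: "card MG * 2 \<le> card S2"
  proof (rule sum_bound[where F = "\<lambda>e. e \<times> UNIV"])
    show "finite MG" using matching_fin[OF G MG(1)] .
    show "finite S2" using fS2 .
    fix e e' assume "e \<in> MG" "e' \<in> MG" "e \<noteq> e'"
    then show "e \<times> UNIV \<inter> e' \<times> UNIV = {}" using matching_props(2)[OF MG(1)] by blast
  next
    fix e assume "e \<in> MG"
    then obtain u v where "e = {u,v}" "mutually_maximally_distant G u v" using matching_props(1)[OF MG(1)] by blast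
    then show "2 \<le> card (S2 \<inter> e \<times> UNIV)" using part2_edge[OF G S2(1)] by simp
  qed
  have 3: "2 * card MG * card MH \<le> card MH * card S2" using mult_le_mono1[OF 2, of "card MH"]
    by (simp add: algebra_simps)
  show ?thesis using 1 3 MH(2) MG(2) S1(2) S2(2) by simp
qed

end
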